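(* Let $Q$ and $P$ be probability measures on the Borel $\sigma$-algebra of $\mathbb{R}$ with $P \gg Q$, both having densities, such that $r = dQ/dP$ is unimodal and $\sup_{x\in\mathbb{R}} r(x) < \infty$. Let $\Phi$ be the CDF of $P$ and define the measures $P' = P\circ\Phi^{-1}$ and $Q' = Q\circ \Phi^{-1}$ on $[0,1]$ (i.e. $P'(A) = P(\Phi^{-1}(A))$, $Q'(A) = Q(\Phi^{-1}(A))$). Then $P'$ is the uniform measure on $[0,1]$, the Radon–Nikodym derivative $dQ'/dP'$ is unimodal, and $$\log \sup_{z\in[0,1]} \frac{dQ'}{dP'}(z) = \log\sup_{x\in\mathbb{R}} \frac{dQ}{dP}(x).$$
   Context: A function $f$ on an interval is unimodal if there is a point $x^*$ such that $f$ is non-decreasing to the left of $x^*$ and non-increasing to the right of $x^*$. *)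

theory Defs
  imports "HOL-Probability.Probability"
begin

definition unimodal_on :: "real set \<Rightarrow> (real \<Rightarrow> real) \<Rightarrow> bool" where
  "unimodal_on S f \<longleftrightarrow>
     (\<exists>c. mono_on {x\<in>S. x \<le> c} f \<and> antimono_on {x\<in>S. c \<le> x} f)"

end

theory Submission
  imports Defs
begin

lemma quantile_galois:
  fixes F :: "real \<Rightarrow> real"
  assumes mono: "mono F" and cont: "\<And>x. isCont F x"
    and bot: "(F \<longlongrightarrow> 0) at_bot" and top: "(F \<longlongrightarrow> 1) at_top"
    and z: "0 < z" "z < 1"
  shows "(\<forall>x. Inf {x. z \<le> F x} \<le> x \<longleftrightarrow> z \<le> F x) \<and> F (Inf {x. z \<le> F x}) = z"
proof -
  define S where "S = {x. z \<le> F x}"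
  have "eventually (\<lambda>x. F x > z) at_top" using order_tendstoD(1)[OF top] z by auto
  then obtain b where b: "F b > z" by (auto simp: eventually_at_top_linorder)
  have "eventually (\<lambda>x. F x < z) at_bot" using order_tendstoD(2)[OF bot] z by auto
  then obtain a where a: "F a < z" by (auto simp: eventually_at_bot_linorder)
  have Sne: "S \<noteq> {}" using b S_def less_imp_le by auto
  have alow: "\<And>s. s \<in> S \<Longrightarrow> a \<le> s"
  proof (rule ccontr)
    fix s assume "s \<in> S" "\<not> a \<le> s"
    then have "F s \<le> F a" using mono by (auto simp: mono_def)
    with \<open>s \<in> S\<close> a show False by (auto simp: S_def)
  qed
  have bdd: "bdd_below S" using alow by (auto simp: bdd_below_def)
  have cl: "closed S" unfolding S_def
    by (rule closed_Collect_le) (auto intro: continuous_at_imp_continuous_on cont)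
  have qS: "Inf S \<in> S" using closed_contains_Inf[OF Sne bdd cl] .
  have gal: "\<And>x. Inf S \<le> x \<longleftrightarrow> z \<le> F x"
  proof
    fix x assume "Inf S \<le> x"
    then have "F (Inf S) \<le> F x" using mono by (auto simp: mono_def)
    with qS show "z \<le> F x" by (auto simp: S_def)
  next
    fix x assume "z \<le> F x"
    then show "Inf S \<le> x" using bdd by (auto simp: S_def intro: cInf_lower)
  qed
  have aq: "a \<le> Inf S" using alow qS by auto
  have "\<exists>x\<ge>a. x \<le> Inf S \<and> F x = z"
    using qS a aq by (intro IVT') (auto simp: S_def intro: continuous_at_imp_continuous_on cont)
  then obtain x where x: "x \<le> Inf S" "F x = z" by auto
  then have "Inf S \<le> x" using gal by auto
  with x have "F (Inf S) = z" by auto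
  with gal show ?thesis unfolding S_def by auto
qed

lemma unimodal_aux:
  fixes r g :: "real \<Rightarrow> real"
  assumes r1: "mono_on {x. x \<le> c} r" and r2: "antimono_on {x. c \<le> x} r"
    and g: "mono_on {0<..<1} g" and rnn: "\<And>x. 0 \<le> r x" and rM: "\<And>x. r x \<le> M"
    and d: "d = Sup (insert 0 {z\<in>{0<..<1}. g z \<le> c})"
    and r': "r' = (\<lambda>z. if z = d then M else if 0 < z \<and> z < 1 then r (g z) else 0)"
  shows "unimodal_on {0..1} r' \<and> d \<in> {0..1} \<and> r' d = M \<and> (\<forall>z. 0 \<le> r' z \<and> r' z \<le> M)"
proof -
  define A where "A = insert 0 {z\<in>{0<..<1}. g z \<le> c}"
  have bA: "bdd_above A" unfolding A_def by (auto simp: bdd_above_def intro!: exI[of _ 1])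
  have d0: "0 \<le> d" unfolding d A_def[symmetric] using bA by (auto simp: A_def intro: cSup_upper)
  have d1: "d \<le> 1" unfolding d A_def[symmetric] by (rule cSup_least) (auto simp: A_def)
  have M0: "0 \<le> M" using rnn rM order.trans by blast
  have left: "g z \<le> c" if "0 < z" "z < 1" "z < d" for z
  proof -
    from that have "\<exists>a\<in>A. z < a" unfolding d A_def[symmetric]
      by (intro less_cSupD) (auto simp: A_def)
    then obtain a where "a \<in> A" "z < a" by auto
    then have "a \<in> {0<..<1}" "g a \<le> c" using that by (auto simp: A_def)
    moreover have "g z \<le> g a" using g \<open>z < a\<close> \<open>a \<in> {0<..<1}\<close> that
      by (auto simp: monotone_on_def)
    ultimately show ?thesis by auto
  qed
  have right: "c < g z" if "0 < z" "z < 1" "d < z" for z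
  proof (rule ccontr)
    assume "\<not> c < g z"
    then have "z \<in> A" using that by (auto simp: A_def)
    then have "z \<le> d" unfolding d A_def[symmetric] using bA by (rule cSup_upper)
    with that show False by auto
  qed
  have bnd: "\<forall>z. 0 \<le> r' z \<and> r' z \<le> M" using rnn rM M0 by (auto simp: r')
  have "mono_on {x \<in> {0..1}. x \<le> d} r'"
  proof (rule monotone_onI)
    fix x y assume x: "x \<in> {x \<in> {0..1}. x \<le> d}" and y: "y \<in> {x \<in> {0..1}. x \<le> d}" and xy: "x \<le> y"
    show "r' x \<le> r' y"
    proof (cases "y = d")
      case True then show ?thesis using bnd by (simp add: r')
    next
      case False
      then have yd: "y < d" using y by auto
      show ?thesis
      proof (cases "x = 0")
        case True then show ?thesis using bnd yd d0 y xy rnn by (auto simp: r')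
      next
        case False
        then have "0 < x" "x < 1" "0 < y" "y < 1" "x < d" using x y xy yd d1 by auto
        then have "g x \<le> g y" "g y \<le> c" "g x \<le> c" using g xy left yd by (auto simp: monotone_on_def)
        then have "r (g x) \<le> r (g y)" using r1 by (auto simp: monotone_on_def)
        then show ?thesis using \<open>0 < x\<close> \<open>x < 1\<close> \<open>0 < y\<close> \<open>y < 1\<close> \<open>x < d\<close> yd by (simp add: r')
      qed
    qed
  qed
  moreover have "antimono_on {x \<in> {0..1}. d \<le> x} r'"
  proof (rule monotone_onI)
    fix x y assume x: "x \<in> {x \<in> {0..1}. d \<le> x}" and y: "y \<in> {x \<in> {0..1}. d \<le> x}" and xy: "x \<le> y"
    show "r' y \<le> r' x"
    proof (cases "x = d")
      case True then show ?thesis using bnd by (simp add: r')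
    next
      case False
      then have xd: "d < x" using x by auto
      show ?thesis
      proof (cases "y = 1")
        case True then show ?thesis using bnd xd d1 x xy rnn by (auto simp: r')
      next
        case False
        then have "0 < x" "x < 1" "0 < y" "y < 1" "d < y" using x y xy xd d0 by auto
        then have "g x \<le> g y" "c < g y" "c < g x" using g xy right xd by (auto simp: monotone_on_def)
        then have "r (g y) \<le> r (g x)" using r2 by (auto simp: monotone_on_def)
        then show ?thesis using \<open>0 < x\<close> \<open>x < 1\<close> \<open>0 < y\<close> \<open>y < 1\<close> \<open>d < y\<close> xd by (simp add: r')
      qed
    qed
  qed
  ultimately have "unimodal_on {0..1} r'" unfolding unimodal_on_def by blast
  then show ?thesis using d0 d1 bnd by (simp add: r')
qed


theorem mainTheorem2:
  fixes P Q :: "real measure" and r :: "real \<Rightarrow> real"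
  assumes "prob_space P" and "prob_space Q"
    and "sets P = sets borel" and "sets Q = sets borel"
    and "absolutely_continuous P Q"
    and "\<exists>f. f \<in> borel_measurable borel \<and> (\<forall>x. 0 \<le> f x) \<and>
               P = density lborel (\<lambda>x. ennreal (f x))"
    and "\<exists>g. g \<in> borel_measurable borel \<and> (\<forall>x. 0 \<le> g x) \<and>
               Q = density lborel (\<lambda>x. ennreal (g x))"
    and "r \<in> borel_measurable borel" and "\<forall>x. 0 \<le> r x"
    and "Q = density P (\<lambda>x. ennreal (r x))"
    and "unimodal_on UNIV r"
    and "bdd_above (range r)"
  shows "distr P borel (cdf P) = uniform_measure lborel {0..1} \<and>
         (\<exists>r'. r' \<in> borel_measurable borel \<and> (\<forall>z. 0 \<le> r' z) \<and>
               distr Q borel (cdf P) = density (distr P borel (cdf P)) (\<lambda>z. ennreal (r' z)) \<and>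
               unimodal_on {0..1} r' \<and> bdd_above (r' ` {0..1}) \<and>
               ln (SUP z\<in>{0..1}. r' z) = ln (SUP x. r x))"
proof -
  obtain f where f: "f \<in> borel_measurable borel" "P = density lborel (\<lambda>x. ennreal (f x))"
    using assms(6) by auto
  interpret P: real_distribution P
    using assms(1,3) by (simp add: real_distribution_def real_distribution_axioms_def)
  define \<Phi> where "\<Phi> = cdf P"
  have cont: "isCont \<Phi> x" for x
  proof -
    have "emeasure P {x} = (\<integral>\<^sup>+ y. ennreal (f y) * indicator {x} y \<partial>lborel)"
      unfolding f(2) using f(1) by (subst emeasure_density) auto
    also have "\<dots> = 0" by (rule nn_integral_null_set) auto
    finally have "measure P {x} = 0" by (simp add: measure_def)
    then show ?thesis unfolding \<Phi>_def using P.isCont_cdf by blast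
  qed
  have monoF: "mono \<Phi>" unfolding \<Phi>_def by (auto simp: mono_def P.cdf_nondecreasing)
  have botF: "(\<Phi> \<longlongrightarrow> 0) at_bot" unfolding \<Phi>_def by (rule P.cdf_lim_at_bot)
  have topF: "(\<Phi> \<longlongrightarrow> 1) at_top" unfolding \<Phi>_def by (rule P.cdf_lim_at_top_prob)
  have F01: "0 \<le> \<Phi> x" "\<Phi> x \<le> 1" for x unfolding \<Phi>_def by (auto simp: P.cdf_nonneg P.cdf_bounded_prob)
  define qf where "qf z = (if z \<in> {0<..<1} then Inf {x. z \<le> \<Phi> x} else 0)" for z
  have gal: "qf z \<le> x \<longleftrightarrow> z \<le> \<Phi> x" and Fq: "\<Phi> (qf z) = z" if "0 < z" "z < 1" for z x
    using quantile_galois[OF monoF cont botF topF that] that by (auto simp: qf_def)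
  have qmono: "mono_on {0<..<1} qf"
  proof (rule monotone_onI)
    fix x y :: real assume "x \<in> {0<..<1}" "y \<in> {0<..<1}" "x \<le> y"
    then show "qf x \<le> qf y" using gal[of x "qf y"] Fq[of y] by auto
  qed
  have qmeas: "qf \<in> borel_measurable borel"
  proof (rule borel_measurable_piecewise_mono[of "{{0<..<1}, -{0<..<1}}"])
    show "mono_on c qf" if "c \<in> {{0<..<1}, - {0<..<1}}" for c
      using that qmono by (auto simp: qf_def monotone_on_def)
  qed auto
  have Fmeas: "\<Phi> \<in> borel_measurable borel" using monoF by (rule borel_measurable_mono)
  define U where "U = uniform_measure lborel {0..1::real}"
  have sU: "sets U = sets borel" "space U = UNIV" by (auto simp: U_def)
  have pU: "prob_space U" unfolding U_def by (rule prob_space_uniform_measure) auto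
  have AEU: "AE z in U. 0 < z \<and> z < 1"
  proof -
    have "AE z in lborel. z \<noteq> 0 \<and> z \<noteq> (1::real)"
      using AE_lborel_singleton[of 0] AE_lborel_singleton[of 1] by eventually_elim auto
    then have "AE z in lborel. z \<in> {0..1} \<longrightarrow> 0 < z \<and> z < (1::real)"
      by eventually_elim auto
    then show ?thesis unfolding U_def by (subst AE_uniform_measure) auto
  qed
  have PU: "P = distr U borel qf"
  proof (rule cdf_unique)
    show "real_distribution P" by (rule P.real_distribution_axioms)
    show "real_distribution (distr U borel qf)"
      using qmeas by (intro prob_space.real_distribution_distr[OF pU]) (auto simp: sU measurable_def)
    show "cdf P = cdf (distr U borel qf)"
    proof
      fix x
      have "cdf (distr U borel qf) x = measure U (qf -` {..x} \<inter> space U)"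
        unfolding cdf_def using qmeas by (subst measure_distr) (auto simp: sU cong: measurable_cong_sets)
      also have "\<dots> = measure U {..\<Phi> x}"
        using AEU proof (intro measure_eq_AE)
        show "AE z in U. (z \<in> qf -` {..x} \<inter> space U) = (z \<in> {..\<Phi> x})"
          using AEU by eventually_elim (auto simp: gal sU)
      qed (use measurable_sets[OF qmeas, of "{..x}"] in \<open>auto simp: sU\<close>)
      also have "\<dots> = measure lborel ({0..1} \<inter> {..\<Phi> x}) / measure lborel {0..1::real}"
        unfolding U_def by (subst measure_uniform_measure) auto
      also have "{0..1} \<inter> {..\<Phi> x} = {0..\<Phi> x}" using F01[of x] by auto
      also have "measure lborel {0..\<Phi> x} / measure lborel {0..1::real} = \<Phi> x" using F01[of x] by simp
      finally show "cdf P x = cdf (distr U borel qf) x" by (simp add: \<Phi>_def)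
    qed
  qed
  obtain c where c1: "mono_on {x. x \<le> c} r" and c2: "antimono_on {x. c \<le> x} r"
    using assms(11) unfolding unimodal_on_def by auto
  define M where "M = (SUP x. r x)"
  have rM: "r x \<le> M" for x unfolding M_def using assms(12) by (simp add: cSUP_upper)
  define d where "d = Sup (insert 0 {z\<in>{0<..<1}. qf z \<le> c})"
  define r' where "r' = (\<lambda>z. if z = d then M else if 0 < z \<and> z < 1 then r (qf z) else 0)"
  have aux: "unimodal_on {0..1} r' \<and> d \<in> {0..1} \<and> r' d = M \<and> (\<forall>z. 0 \<le> r' z \<and> r' z \<le> M)"
    by (rule unimodal_aux[OF c1 c2 qmono _ rM d_def r'_def]) (use assms(9) in auto)
  have rmeas[measurable]: "r \<in> borel_measurable borel" by (rule assms(8))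
  note qmeas[measurable] Fmeas[measurable]
  have r'meas: "r' \<in> borel_measurable borel" unfolding r'_def by measurable
  have part1: "distr P borel \<Phi> = U"
  proof -
    have "distr P borel \<Phi> = distr U borel (\<Phi> \<circ> qf)"
      unfolding PU by (subst distr_distr) (auto simp: sU cong: measurable_cong_sets)
    also have "\<dots> = distr U borel (\<lambda>z. z)"
    proof (rule distr_cong_AE)
      show "AE z in U. (\<Phi> \<circ> qf) z = z" using AEU by eventually_elim (simp add: Fq)
    qed (auto simp: sU cong: measurable_cong_sets)
    also have "\<dots> = U" by (rule distr_id2) (simp add: sU)
    finally show ?thesis .
  qed
  have part2: "distr Q borel \<Phi> = density U (\<lambda>z. ennreal (r' z))"
  proof -
    have "Q = distr (density U (\<lambda>z. ennreal (r (qf z)))) borel qf"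
      unfolding assms(10) PU by (subst density_distr) (auto simp: sU cong: measurable_cong_sets)
    then have "distr Q borel \<Phi> = distr (density U (\<lambda>z. ennreal (r (qf z)))) borel (\<Phi> \<circ> qf)"
      by (simp, subst distr_distr) (auto simp: sU cong: measurable_cong_sets)
    also have "\<dots> = distr (density U (\<lambda>z. ennreal (r (qf z)))) borel (\<lambda>z. z)"
    proof (rule distr_cong_AE)
      have "AE z in U. (\<Phi> \<circ> qf) z = z" using AEU by eventually_elim (simp add: Fq)
      then show "AE z in density U (\<lambda>z. ennreal (r (qf z))). (\<Phi> \<circ> qf) z = z"
        by (subst AE_density) (auto simp: sU cong: measurable_cong_sets elim: eventually_mono)
    qed (auto simp: sU cong: measurable_cong_sets)
    also have "\<dots> = density U (\<lambda>z. ennreal (r (qf z)))" by (rule distr_id2) (simp add: sU)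
    also have "\<dots> = density U (\<lambda>z. ennreal (r' z))"
    proof (rule density_cong)
      have "AE z in U. z \<noteq> d"
      proof -
        have "AE z in lborel. z \<noteq> d" by (rule AE_lborel_singleton)
        then show ?thesis unfolding U_def by (intro AE_uniform_measureI) (auto elim!: eventually_mono)
      qed
      then show "AE z in U. ennreal (r (qf z)) = ennreal (r' z)"
        using AEU by eventually_elim (auto simp: r'_def)
    qed (use r'meas in \<open>auto simp: sU cong: measurable_cong_sets\<close>)
    finally show ?thesis .
  qed
  have sup: "(SUP z\<in>{0..1}. r' z) = M"
    by (rule cSup_eq_maximum) (use aux in \<open>force+\<close>)
  have bdd: "bdd_above (r' ` {0..1})" using aux by (auto simp: bdd_above_def)
  show ?thesis
    unfolding part1[unfolded \<Phi>_def] part2[unfolded \<Phi>_def part1[unfolded \<Phi>_def]] U_def[symmetric]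
    using aux r'meas sup bdd by (auto simp: M_def intro!: exI[of _ r'])
qed

end
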